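(* Let $G$ be a $k$-regular graph with $k\ge 43$ and let $C$ be a Hamiltonian cycle of $G$. Then there exists a set $S\subseteq V(G)$ such that (1) no two vertices adjacent on $C$ both lie in $S$, and (2) every vertex $v$ of $G$ either lies in $S$ or is joined to some vertex $w\in S$ by an edge of $G$ not in $C$. *)

theory Defs
  imports Main
begin

definition simple_graph :: "'a set \<Rightarrow> ('a \<Rightarrow> 'a \<Rightarrow> bool) \<Rightarrow> bool" where
  "simple_graph V E \<longleftrightarrow> finite V \<and> (\<forall>u v. E u v \<longrightarrow> u \<in> V \<and> v \<in> V)
     \<and> (\<forall>u v. E u v \<longrightarrow> E v u) \<and> (\<forall>v. \<not> E v v)"

definition neighbours :: "'a set \<Rightarrow> ('a \<Rightarrow> 'a \<Rightarrow> bool) \<Rightarrow> 'a \<Rightarrow> 'a set" where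
  "neighbours V E v = {u \<in> V. E v u}"

definition regular :: "'a set \<Rightarrow> ('a \<Rightarrow> 'a \<Rightarrow> bool) \<Rightarrow> nat \<Rightarrow> bool" where
  "regular V E k \<longleftrightarrow> (\<forall>v\<in>V. card (neighbours V E v) = k)"

definition ham_cycle :: "'a set \<Rightarrow> ('a \<Rightarrow> 'a \<Rightarrow> bool) \<Rightarrow> 'a list \<Rightarrow> bool" where
  "ham_cycle V E C \<longleftrightarrow> distinct C \<and> set C = V \<and> length C \<ge> 3
     \<and> (\<forall>i < length C. E (C ! i) (C ! ((i + 1) mod length C)))"

definition cycle_adj :: "'a list \<Rightarrow> 'a \<Rightarrow> 'a \<Rightarrow> bool" where
  "cycle_adj C u v \<longleftrightarrow> (\<exists>i < length C.
     (u = C ! i \<and> v = C ! ((i + 1) mod length C)) \<or>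
     (v = C ! i \<and> u = C ! ((i + 1) mod length C)))"

end

theory Submission
  imports Defs Complex_Main "HOL-Library.FuncSet"
begin


definition mrg :: "'i set \<Rightarrow> ('i \<Rightarrow> bool) \<Rightarrow> ('i \<Rightarrow> bool) \<Rightarrow> 'i \<Rightarrow> bool" where
  "mrg B g h = (\<lambda>i. if i \<in> B then g i else h i)"

lemma indep_card:
  fixes I B :: "'i set" and A W :: "('i \<Rightarrow> bool) set"
  defines "\<Omega> \<equiv> I \<rightarrow>\<^sub>E (UNIV::bool set)"
  assumes fin: "finite I" and BI: "B \<subseteq> I" and AO: "A \<subseteq> \<Omega>" and WO: "W \<subseteq> \<Omega>"
  and detA: "\<forall>f\<in>\<Omega>. \<forall>g\<in>\<Omega>. (\<forall>i\<in>B. f i = g i) \<longrightarrow> f \<in> A \<longrightarrow> g \<in> A"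
  and detW: "\<forall>f\<in>\<Omega>. \<forall>g\<in>\<Omega>. (\<forall>i\<in>I-B. f i = g i) \<longrightarrow> f \<in> W \<longrightarrow> g \<in> W"
  shows "card (A \<inter> W) * card \<Omega> = card A * card W"
proof -
  define \<Omega>1 where "\<Omega>1 = B \<rightarrow>\<^sub>E (UNIV::bool set)"
  define \<Omega>2 where "\<Omega>2 = (I - B) \<rightarrow>\<^sub>E (UNIV::bool set)"
  define s where "s = (\<lambda>f::'i\<Rightarrow>bool. (restrict f B, restrict f (I - B)))"
  have finB: "finite B" using fin BI finite_subset by blast
  have mrgO: "mrg B g h \<in> \<Omega>" if "g \<in> \<Omega>1" "h \<in> \<Omega>2" for g h
    using that BI unfolding \<Omega>_def \<Omega>1_def \<Omega>2_def mrg_def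
    by (auto simp: PiE_iff extensional_def)
  have sm: "s (mrg B g h) = (g, h)" if "g \<in> \<Omega>1" "h \<in> \<Omega>2" for g h
    using that unfolding s_def \<Omega>1_def \<Omega>2_def mrg_def
    by (auto simp: PiE_iff extensional_def restrict_def fun_eq_iff)
  have ms: "mrg B (fst (s f)) (snd (s f)) = f" if "f \<in> \<Omega>" for f
    using that BI unfolding s_def \<Omega>_def mrg_def
    by (auto simp: PiE_iff extensional_def restrict_def fun_eq_iff)
  have sO: "s f \<in> \<Omega>1 \<times> \<Omega>2" for f
    unfolding s_def \<Omega>1_def \<Omega>2_def by auto
  have inj: "inj_on s \<Omega>" by (metis inj_onI ms)
  have cX: "card X = card (s ` X)" if "X \<subseteq> \<Omega>" for X
    using inj that by (metis card_image inj_on_subset)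
  define R1 where "R1 X = (\<lambda>f. restrict f B) ` X" for X :: "('i \<Rightarrow> bool) set"
  define R2 where "R2 X = (\<lambda>f. restrict f (I - B)) ` X" for X :: "('i \<Rightarrow> bool) set"
  have sA: "s ` A = R1 A \<times> \<Omega>2"
  proof
    show "s ` A \<subseteq> R1 A \<times> \<Omega>2" unfolding R1_def s_def \<Omega>2_def by auto
    show "R1 A \<times> \<Omega>2 \<subseteq> s ` A"
    proof
      fix x assume "x \<in> R1 A \<times> \<Omega>2"
      then obtain f h where f: "f \<in> A" and h: "h \<in> \<Omega>2" and x: "x = (restrict f B, h)"
        unfolding R1_def by auto
      have g1: "restrict f B \<in> \<Omega>1" unfolding \<Omega>1_def by auto
      have "mrg B (restrict f B) h \<in> A"
        using f AO by (intro detA[rule_format, OF _ mrgO[OF g1 h] _ f]) (auto simp: mrg_def)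
      moreover have "s (mrg B (restrict f B) h) = x" using sm[OF g1 h] x by simp
      ultimately show "x \<in> s ` A" by force
    qed
  qed
  have sW: "s ` W = \<Omega>1 \<times> R2 W"
  proof
    show "s ` W \<subseteq> \<Omega>1 \<times> R2 W" unfolding R2_def s_def \<Omega>1_def by auto
    show "\<Omega>1 \<times> R2 W \<subseteq> s ` W"
    proof
      fix x assume "x \<in> \<Omega>1 \<times> R2 W"
      then obtain f g where f: "f \<in> W" and g: "g \<in> \<Omega>1" and x: "x = (g, restrict f (I - B))"
        unfolding R2_def by auto
      have h2: "restrict f (I - B) \<in> \<Omega>2" unfolding \<Omega>2_def by auto
      have "mrg B g (restrict f (I - B)) \<in> W"
        using f WO by (intro detW[rule_format, OF _ mrgO[OF g h2] _ f]) (auto simp: mrg_def)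
      moreover have "s (mrg B g (restrict f (I - B))) = x" using sm[OF g h2] x by simp
      ultimately show "x \<in> s ` W" by force
    qed
  qed
  have sAW: "s ` (A \<inter> W) = R1 A \<times> R2 W"
    using sA sW inj AO WO by (auto simp: inj_on_image_Int[OF inj AO WO] R1_def R2_def \<Omega>1_def \<Omega>2_def)
  have sOm: "s ` \<Omega> = \<Omega>1 \<times> \<Omega>2"
  proof
    show "s ` \<Omega> \<subseteq> \<Omega>1 \<times> \<Omega>2" using sO by blast
    show "\<Omega>1 \<times> \<Omega>2 \<subseteq> s ` \<Omega>"
    proof
      fix x assume "x \<in> \<Omega>1 \<times> \<Omega>2"
      then obtain g h where "g \<in> \<Omega>1" "h \<in> \<Omega>2" "x = (g, h)" by blast
      then show "x \<in> s ` \<Omega>" using mrgO sm by (metis image_eqI)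
    qed
  qed
  have c1: "card (A \<inter> W) = card (R1 A) * card (R2 W)"
    using cX[of "A \<inter> W"] AO sAW by (auto simp add: card_cartesian_product)
  have c2: "card A = card (R1 A) * card \<Omega>2" using cX[OF AO] sA by (simp add: card_cartesian_product)
  have c3: "card W = card \<Omega>1 * card (R2 W)" using cX[OF WO] sW by (simp add: card_cartesian_product)
  have c4: "card \<Omega> = card \<Omega>1 * card \<Omega>2" using cX[of \<Omega>] sOm by (simp add: card_cartesian_product)
  show ?thesis unfolding c1 c2 c3 c4 by (simp only: mult_ac)
qed


lemma lll:
  fixes I :: "'i set" and J :: "'j set" and A :: "'j \<Rightarrow> ('i \<Rightarrow> bool) set"
    and B :: "'j \<Rightarrow> 'i set" and p :: real and D :: nat
  defines "\<Omega> \<equiv> I \<rightarrow>\<^sub>E (UNIV::bool set)"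
  assumes finI: "finite I" and finJ: "finite J"
  and BI: "\<forall>j\<in>J. B j \<subseteq> I" and AO: "\<forall>j\<in>J. A j \<subseteq> \<Omega>"
  and det: "\<forall>j\<in>J. \<forall>f\<in>\<Omega>. \<forall>g\<in>\<Omega>. (\<forall>i\<in>B j. f i = g i) \<longrightarrow> f \<in> A j \<longrightarrow> g \<in> A j"
  and pA: "\<forall>j\<in>J. real (card (A j)) \<le> p * real (card \<Omega>)"
  and dep: "\<forall>j\<in>J. card {j'\<in>J. B j' \<inter> B j \<noteq> {}} \<le> D"
  and p0: "0 \<le> p" and pD: "4 * p * D \<le> 1" and p1: "2 * p < 1"
  shows "\<exists>f\<in>\<Omega>. \<forall>j\<in>J. f \<notin> A j"
proof -
  define av where "av Z = {f\<in>\<Omega>. \<forall>j\<in>Z. f \<notin> A j}" for Z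
  have finO: "finite \<Omega>" unfolding \<Omega>_def using finI by (simp add: finite_PiE)
  have cO: "card \<Omega> > 0" using finO unfolding \<Omega>_def
    by (metis PiE_eq_empty_iff UNIV_not_empty card_gt_0_iff)
  have finav: "finite (av Z)" for Z using finO unfolding av_def by simp
  have avdet: "\<forall>f\<in>\<Omega>. \<forall>g\<in>\<Omega>. (\<forall>i\<in>I - B j. f i = g i) \<longrightarrow> f \<in> av Z \<longrightarrow> g \<in> av Z"
    if "Z \<subseteq> J" "\<forall>i\<in>Z. B i \<inter> B j = {}" for Z j
  proof (intro ballI impI)
    fix f g assume f: "f \<in> \<Omega>" and g: "g \<in> \<Omega>" and agr: "\<forall>i\<in>I - B j. f i = g i" and fa: "f \<in> av Z"
    show "g \<in> av Z" unfolding av_def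
    proof (intro CollectI conjI ballI g)
      fix i assume i: "i \<in> Z"
      have "\<forall>x\<in>B i. g x = f x" using agr that i BI by blast
      moreover have "f \<notin> A i" using fa i unfolding av_def by auto
      ultimately show "g \<notin> A i" using det i that(1) f g by blast
    qed
  qed
  have key: "\<forall>Z. Z \<subseteq> J \<longrightarrow> card Z = m \<longrightarrow>
      (\<forall>j\<in>J. real (card (A j \<inter> av Z)) \<le> 2 * p * real (card (av Z)))" for m
  proof (induction m rule: less_induct)
    case (less m)
    show ?case
    proof (intro allI impI ballI)
      fix Z j assume ZJ: "Z \<subseteq> J" and cZ: "card Z = m" and j: "j \<in> J"
      define Z1 where "Z1 = {i\<in>Z. B i \<inter> B j \<noteq> {}}"
      define Z2 where "Z2 = Z - Z1"
      have finZ: "finite Z" using ZJ finJ finite_subset by blast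
      have Z2J: "Z2 \<subseteq> J" using ZJ unfolding Z2_def by auto
      have Z2d: "\<forall>i\<in>Z2. B i \<inter> B j = {}" unfolding Z2_def Z1_def by auto
      have ind: "card (A j \<inter> av Z2) * card \<Omega> = card (A j) * card (av Z2)"
      proof -
        have h1: "B j \<subseteq> I" using BI j by blast
        have h2: "A j \<subseteq> \<Omega>" using AO j by blast
        have h3: "av Z2 \<subseteq> \<Omega>" unfolding av_def by blast
        have h4: "\<forall>f\<in>\<Omega>. \<forall>g\<in>\<Omega>. (\<forall>i\<in>B j. f i = g i) \<longrightarrow> f \<in> A j \<longrightarrow> g \<in> A j"
          using det j by blast
        note h5 = avdet[OF Z2J Z2d]
        show ?thesis
          using indep_card[OF finI h1 h2[unfolded \<Omega>_def] h3[unfolded \<Omega>_def]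
              h4[unfolded \<Omega>_def] h5[unfolded \<Omega>_def]]
          unfolding \<Omega>_def .
      qed
      have b1: "real (card (A j \<inter> av Z2)) \<le> p * real (card (av Z2))"
      proof -
        have "real (card (A j \<inter> av Z2)) * real (card \<Omega>) = real (card (A j)) * real (card (av Z2))"
          using ind by (metis of_nat_mult)
        also have "\<dots> \<le> p * real (card \<Omega>) * real (card (av Z2))"
          using pA j by (simp add: mult_right_mono)
        finally show ?thesis using cO by (simp add: mult.commute mult.left_commute)
      qed
      have sub: "av Z \<subseteq> av Z2" unfolding av_def Z2_def by auto
      have diff: "av Z2 - av Z \<subseteq> (\<Union>i\<in>Z1. A i \<inter> av Z2)"
        unfolding av_def Z2_def by auto
      have "card (av Z2) - card (av Z) = card (av Z2 - av Z)"
        using sub finav by (simp add: card_Diff_subset)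
      also have "\<dots> \<le> card (\<Union>i\<in>Z1. A i \<inter> av Z2)"
        using diff by (intro card_mono) (auto intro: finite_subset[OF _ finav])
      also have "\<dots> \<le> (\<Sum>i\<in>Z1. card (A i \<inter> av Z2))"
        by (rule card_UN_le) (use finZ Z1_def in auto)
      finally have dd: "real (card (av Z2)) - real (card (av Z)) \<le> (\<Sum>i\<in>Z1. real (card (A i \<inter> av Z2)))"
        using card_mono[OF finav sub] by (simp add: of_nat_diff flip: of_nat_sum)
      have cZ1: "card Z1 \<le> D"
      proof -
        have "Z1 \<subseteq> {j'\<in>J. B j' \<inter> B j \<noteq> {}}" using ZJ unfolding Z1_def by auto
        then have "card Z1 \<le> card {j'\<in>J. B j' \<inter> B j \<noteq> {}}" using finJ by (intro card_mono) auto
        then show ?thesis using dep j by force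
      qed
      have half: "real (card (av Z2)) \<le> 2 * real (card (av Z))"
      proof (cases "Z1 = {}")
        case True
        then have "Z2 = Z" unfolding Z2_def by simp
        then show ?thesis by simp
      next
        case False
        have fZ1: "finite Z1" using finZ unfolding Z1_def by simp
        have "Z1 \<subseteq> Z" unfolding Z1_def by auto
        then have "Z2 \<subset> Z" unfolding Z2_def using False by blast
        then have "card Z2 < card Z" using finZ by (rule psubset_card_mono[rotated])
        then have IH: "\<forall>i\<in>J. real (card (A i \<inter> av Z2)) \<le> 2 * p * real (card (av Z2))"
          using less.IH cZ Z2J by blast
        have "(\<Sum>i\<in>Z1. real (card (A i \<inter> av Z2))) \<le> (\<Sum>i\<in>Z1. 2 * p * real (card (av Z2)))"
          using IH ZJ unfolding Z1_def by (intro sum_mono) auto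
        also have "\<dots> = real (card Z1) * (2 * p * real (card (av Z2)))" by simp
        also have "\<dots> \<le> real D * (2 * p * real (card (av Z2)))"
          using cZ1 p0 by (intro mult_right_mono) auto
        also have "\<dots> \<le> 1/2 * real (card (av Z2))"
        proof -
          have "real D * (2 * p) \<le> 1/2" using pD by (simp add: algebra_simps)
          then show ?thesis using mult_right_mono[of "real D * (2 * p)" "1/2" "real (card (av Z2))"]
            by (simp add: algebra_simps)
        qed
        finally show ?thesis using dd by simp
      qed
      have "card (A j \<inter> av Z) \<le> card (A j \<inter> av Z2)"
        by (rule card_mono) (use finav sub in auto)
      then have "real (card (A j \<inter> av Z)) \<le> real (card (A j \<inter> av Z2))" by simp
      also have "\<dots> \<le> p * real (card (av Z2))" by (rule b1)
      also have "\<dots> \<le> p * (2 * real (card (av Z)))" using half p0 by (rule mult_left_mono)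
      finally show "real (card (A j \<inter> av Z)) \<le> 2 * p * real (card (av Z))" by simp
    qed
  qed
  have pos: "Z \<subseteq> J \<longrightarrow> card (av Z) > 0" if "finite Z" for Z
    using that
  proof (induction Z rule: finite_induct)
    case empty
    then show ?case using cO unfolding av_def by simp
  next
    case (insert j Z)
    show ?case
    proof
      assume ins: "insert j Z \<subseteq> J"
      then have c: "card (av Z) > 0" using insert by simp
      have k: "real (card (A j \<inter> av Z)) \<le> 2 * p * real (card (av Z))"
        using key ins by blast
      have e: "av (insert j Z) = av Z - (A j \<inter> av Z)" unfolding av_def by auto
      have "real (card (av (insert j Z))) = real (card (av Z)) - real (card (A j \<inter> av Z))"
        unfolding e using finav by (simp add: card_Diff_subset of_nat_diff card_mono)
      also have "\<dots> \<ge> (1 - 2 * p) * real (card (av Z))" using k by (simp add: algebra_simps)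
      moreover have "(1 - 2 * p) * real (card (av Z)) > 0" using p1 c by simp
      ultimately show "card (av (insert j Z)) > 0" by linarith
    qed
  qed
  have "card (av J) > 0" using pos finJ by blast
  then obtain f where "f \<in> av J" by (metis card_gt_0_iff ex_in_conv)
  then show ?thesis unfolding av_def by blast
qed



definition pr :: "nat \<Rightarrow> nat \<Rightarrow> nat" where "pr n i = (i + n - 1) mod n"
definition nx :: "nat \<Rightarrow> nat \<Rightarrow> nat" where "nx n i = (i + 1) mod n"
definition start :: "nat \<Rightarrow> (nat \<Rightarrow> bool) \<Rightarrow> nat \<Rightarrow> bool" where
  "start n f i \<longleftrightarrow> \<not> f (pr n i) \<and> f i"

lemma pr_lt: "0 < n \<Longrightarrow> pr n i < n" unfolding pr_def by simp
lemma nx_lt: "0 < n \<Longrightarrow> nx n i < n" unfolding nx_def by simp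
lemma pr_eq: "i < n \<Longrightarrow> pr n i = (if i = 0 then n - 1 else i - 1)"
proof (cases "i = 0")
  case True assume "i < n" then show ?thesis using True unfolding pr_def by simp
next
  case False assume "i < n"
  then have "i + n - 1 = (i - 1) + n" using False by simp
  moreover have "((i - 1) + n) mod n = i - 1" using \<open>i < n\<close> by simp
  ultimately show ?thesis using False unfolding pr_def by simp
qed
lemma nx_eq: "i < n \<Longrightarrow> nx n i = (if i + 1 = n then 0 else i + 1)"
  unfolding nx_def by auto
lemma pr_nx: "i < n \<Longrightarrow> pr n (nx n i) = i"
  by (auto simp add: pr_eq nx_eq nx_lt)
lemma nx_pr: "i < n \<Longrightarrow> nx n (pr n i) = i"
  by (auto simp add: pr_eq nx_eq pr_lt)
lemma pr_neq: "i < n \<Longrightarrow> 2 \<le> n \<Longrightarrow> pr n i \<noteq> i"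
  by (auto simp add: pr_eq)


lemma run_end:
  assumes P: "P \<subseteq> {0..<n}" "P \<noteq> {}" "card P < n"
  shows "\<exists>i\<in>P. nx n i \<notin> P"
proof (rule ccontr)
  assume "\<not> (\<exists>i\<in>P. nx n i \<notin> P)"
  then have H: "\<forall>i\<in>P. nx n i \<in> P" by blast
  obtain i0 where i0: "i0 \<in> P" using P by blast
  have i0n: "i0 < n" using i0 P by auto
  have all: "(i0 + j) mod n \<in> P" for j
  proof (induction j)
    case 0 then show ?case using i0 i0n by simp
  next
    case (Suc j)
    have "nx n ((i0 + j) mod n) = (i0 + Suc j) mod n" unfolding nx_def
      by (simp add: mod_Suc_eq)
    then show ?case using H Suc by metis
  qed
  have "{0..<n} \<subseteq> P"
  proof
    fix x assume "x \<in> {0..<n}"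
    then have "x = (i0 + (n - i0 + x)) mod n" using i0n by simp
    then show "x \<in> P" using all by metis
  qed
  moreover have "finite P" using P(1) finite_subset by blast
  ultimately have "n \<le> card P" by (metis card_atLeastLessThan card_mono diff_zero)
  then show False using P by simp
qed

lemma card_Om: "card ({0..<n} \<rightarrow>\<^sub>E (UNIV::bool set)) = 2 ^ n"
  by (simp add: card_PiE)

lemma pbound:
  assumes n2: "2 \<le> n"
  shows "P \<subseteq> {0..<n} \<Longrightarrow> card P < n \<Longrightarrow>
    4 ^ card P * card {f \<in> {0..<n} \<rightarrow>\<^sub>E (UNIV::bool set). \<forall>i\<in>P. \<not> start n f i} \<le> 3 ^ card P * 2 ^ n"
proof (induction "card P" arbitrary: P)
  case 0
  have "P = {}" using 0 finite_subset[OF 0(2)] by auto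
  then show ?case using card_Om[of n] by simp
next
  case (Suc m P)
  define \<Omega> where "\<Omega> = {0..<n} \<rightarrow>\<^sub>E (UNIV::bool set)"
  have finO: "finite \<Omega>" unfolding \<Omega>_def by (simp add: finite_PiE)
  have n0: "0 < n" using n2 by simp
  have "P \<noteq> {}" using Suc(2) by auto
  then obtain i where iP: "i \<in> P" and nxi: "nx n i \<notin> P" using run_end Suc by blast
  have inn: "i < n" using iP Suc(3) by auto
  define P' where "P' = P - {i}"
  have cP': "card P' = m" using Suc(2) iP unfolding P'_def
    by (metis card_Diff_singleton diff_Suc_1 finite_subset[OF Suc(3)] finite_atLeastLessThan)
  have IH: "4 ^ m * card {f \<in> \<Omega>. \<forall>i\<in>P'. \<not> start n f i} \<le> 3 ^ m * 2 ^ n"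
  proof -
    have "P' \<subseteq> {0..<n}" "card P' < n" using Suc(3,4) cP' Suc(2) unfolding P'_def by auto
    then show ?thesis using Suc(1)[of P'] cP' unfolding \<Omega>_def by simp
  qed
  define X where "X = {f \<in> \<Omega>. \<forall>i\<in>P'. \<not> start n f i}"
  define q where "q = pr n i"
  have qn: "q < n" unfolding q_def using pr_lt n0 by simp
  have qi: "q \<noteq> i" unfolding q_def using pr_neq inn n2 by simp
  have prP': "pr n i' \<noteq> i" if "i' \<in> P'" for i'
  proof
    assume "pr n i' = i"
    then have "nx n i = i'" using nx_pr[of i' n] that Suc(3) unfolding P'_def by auto
    then show False using that nxi unfolding P'_def by auto
  qed
  have prP'q: "pr n i' \<noteq> q" if "i' \<in> P'" for i'
  proof
    assume "pr n i' = q"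
    then have "nx n (pr n i') = nx n (pr n i)" unfolding q_def by simp
    then have "i' = i" using nx_pr[of i' n] nx_pr[of i n] that Suc(3) inn unfolding P'_def by auto
    then show False using that unfolding P'_def by auto
  qed
  define fl where "fl f = f(i := \<not> f i)" for f :: "nat \<Rightarrow> bool"
  define fq where "fq f = f(q := False)" for f :: "nat \<Rightarrow> bool"
  have flO: "fl f \<in> \<Omega>" if "f \<in> \<Omega>" for f
    using that inn unfolding fl_def \<Omega>_def by (auto simp: PiE_iff extensional_def)
  have fqO: "fq f \<in> \<Omega>" if "f \<in> \<Omega>" for f
    using that qn unfolding fq_def \<Omega>_def by (auto simp: PiE_iff extensional_def)
  have flX: "fl f \<in> X" if "f \<in> X" for f
  proof -
    have "\<not> start n (fl f) i'" if "i' \<in> P'" "\<forall>i\<in>P'. \<not> start n f i" for i'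
      using that prP'[OF that(1)] unfolding fl_def start_def P'_def by auto
    then show ?thesis using that flO unfolding X_def by auto
  qed
  have fqX: "fq f \<in> X" if "f \<in> X" for f
  proof -
    have "\<not> start n (fq f) i'" if "i' \<in> P'" "\<forall>i\<in>P'. \<not> start n f i" for i'
      using that prP'q[OF that(1)] unfolding fq_def start_def by auto
    then show ?thesis using that fqO unfolding X_def by auto
  qed
  have finX: "finite X" using finO unfolding X_def by simp
  define X0 where "X0 = {f\<in>X. \<not> f q}"
  define X1 where "X1 = {f\<in>X. f q}"
  define X00 where "X00 = {f\<in>X0. \<not> f i}"
  define X01 where "X01 = {f\<in>X0. f i}"
  have fin0: "finite X0" "finite X1" "finite X00" "finite X01"
    using finX unfolding X0_def X1_def X00_def X01_def by auto
  have injfl: "inj_on fl A" for A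
  proof (rule inj_onI)
    fix f g assume "fl f = fl g"
    then have "fl (fl f) = fl (fl g)" by simp
    moreover have "fl (fl h) = h" for h unfolding fl_def by (simp add: fun_eq_iff)
    ultimately show "f = g" by simp
  qed
  have flq: "fl f q = f q" for f unfolding fl_def using qi by simp
  have fli: "fl f i = (\<not> f i)" for f unfolding fl_def by simp
  have c1: "card X00 \<le> card X01"
    by (rule card_inj_on_le[OF injfl _ fin0(4)])
       (use flX qi in \<open>auto simp: X00_def X01_def X0_def flq fli\<close>)
  have c2: "card X01 \<le> card X00"
    by (rule card_inj_on_le[OF injfl _ fin0(3)])
       (use flX qi in \<open>auto simp: X00_def X01_def X0_def flq fli\<close>)
  have injfq: "inj_on fq X1"
  proof (rule inj_onI)
    fix f g assume f: "f \<in> X1" and g: "g \<in> X1" and e: "fq f = fq g"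
    have "(fq h)(q := True) = h" if "h \<in> X1" for h
      using that unfolding fq_def X1_def by (auto simp: fun_eq_iff)
    then show "f = g" using f g e by metis
  qed
  have fqq: "fq f q = False" for f unfolding fq_def by simp
  have c3: "card X1 \<le> card X0"
    by (rule card_inj_on_le[OF injfq _ fin0(1)])
       (use fqX in \<open>auto simp: X1_def X0_def fqq\<close>)
  have c4: "card X = card X0 + card X1"
  proof -
    have "X = X0 \<union> X1" "X0 \<inter> X1 = {}" unfolding X0_def X1_def by auto
    then show ?thesis using fin0 by (simp add: card_Un_disjoint)
  qed
  have c5: "card X0 = card X00 + card X01"
  proof -
    have "X0 = X00 \<union> X01" "X00 \<inter> X01 = {}" unfolding X00_def X01_def by auto
    then show ?thesis using fin0 by (simp add: card_Un_disjoint)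
  qed
  define Y where "Y = {f \<in> \<Omega>. \<forall>i\<in>P. \<not> start n f i}"
  have Yeq: "Y = X - X01"
  proof -
    have "P = insert i P'" using iP unfolding P'_def by auto
    then show ?thesis unfolding Y_def X_def X01_def X0_def q_def start_def by auto
  qed
  have c6: "card Y = card X - card X01"
    unfolding Yeq by (rule card_Diff_subset) (use fin0 in \<open>auto simp: X01_def X0_def\<close>)
  have c7: "card X01 \<le> card X" using c4 c5 by simp
  have key: "4 * card Y \<le> 3 * card X" using c1 c2 c3 c4 c5 c6 c7 by linarith
  have "4 ^ card P * card Y = 4 ^ m * (4 * card Y)" using Suc(2)[symmetric] by simp
  also have "\<dots> \<le> 4 ^ m * (3 * card X)" using key by simp
  also have "\<dots> = 3 * (4 ^ m * card X)" by simp
  also have "\<dots> \<le> 3 * (3 ^ m * 2 ^ n)" using IH unfolding X_def by simp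
  also have "\<dots> = 3 ^ card P * 2 ^ n" using Suc(2)[symmetric] by simp
  finally show ?case unfolding Y_def \<Omega>_def .
qed


lemma numeric: "k \<ge> 43 \<Longrightarrow> 16 * (k + 1)^2 * 3 ^ (k - 1) \<le> (4::nat) ^ (k - 1)"
proof (induction k rule: nat_induct_at_least)
  case base
  then show ?case by simp
next
  case (Suc k)
  have "43 * k \<le> k * k" using Suc(1) by simp
  then have b: "8 + k * 4 \<le> k * k" using Suc(1) by linarith
  then have a: "3 * (k + 2)^2 \<le> 4 * (k + 1)^2" by (simp add: power2_eq_square algebra_simps)
  have "16 * (Suc k + 1)^2 * 3 ^ (Suc k - 1) = 16 * (3 * (k + 2)^2) * 3 ^ (k - 1)"
    using Suc(1) by (cases k) (auto simp: algebra_simps)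
  also have "\<dots> \<le> 16 * (4 * (k + 1)^2) * 3 ^ (k - 1)" using a by simp
  also have "\<dots> = 4 * (16 * (k + 1)^2 * 3 ^ (k - 1))" by simp
  also have "\<dots> \<le> 4 * 4 ^ (k - 1)" using Suc(2) by simp
  also have "\<dots> = 4 ^ (Suc k - 1)" using Suc(1) by (cases k) auto
  finally show ?case .
qed

theorem theorem4p3:
  fixes V :: "'a set" and E :: "'a \<Rightarrow> 'a \<Rightarrow> bool" and k :: nat and C :: "'a list"
  assumes "simple_graph V E" and "regular V E k" and "k \<ge> 43" and "ham_cycle V E C"
  shows "\<exists>S \<subseteq> V. (\<forall>u\<in>S. \<forall>v\<in>S. \<not> cycle_adj C u v) \<and>
           (\<forall>v\<in>V. v \<in> S \<or> (\<exists>w\<in>S. E v w \<and> \<not> cycle_adj C v w))"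
proof -
  define n where "n = length C"
  have dist: "distinct C" and setC: "set C = V" and n3: "n \<ge> 3"
    and cyc: "\<forall>i < n. E (C ! i) (C ! ((i + 1) mod n))"
    using assms(4) unfolding ham_cycle_def n_def by auto
  have finV: "finite V" and Esym: "\<And>u v. E u v \<Longrightarrow> E v u" and Eirr: "\<And>v. \<not> E v v"
    and EV: "\<And>u v. E u v \<Longrightarrow> u \<in> V \<and> v \<in> V"
    using assms(1) unfolding simple_graph_def by auto
  have reg: "\<And>v. v \<in> V \<Longrightarrow> card (neighbours V E v) = k"
    using assms(2) unfolding regular_def by auto
  have cardV: "card V = n" using distinct_card[OF dist] setC n_def by simp
  have n0: "0 < n" "2 \<le> n" using n3 by auto
  have nthV: "C ! i \<in> V" if "i < n" for i using that setC n_def by auto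
  have nthinj: "C ! i = C ! j \<longleftrightarrow> i = j" if "i < n" "j < n" for i j
    using nth_eq_iff_index_eq[OF dist] that n_def by auto
  have Vnth: "\<exists>i<n. C ! i = v" if "v \<in> V" for v
    using that setC n_def by (auto simp: in_set_conv_nth)
  have cadj_sym: "cycle_adj C u v \<longleftrightarrow> cycle_adj C v u" for u v
    unfolding cycle_adj_def by blast
  have cadj: "cycle_adj C u v \<longleftrightarrow> (\<exists>j<n. (u = C ! j \<and> v = C ! nx n j) \<or> (v = C ! j \<and> u = C ! nx n j))" for u v
    unfolding cycle_adj_def nx_def n_def by simp
  define NH where "NH v = insert v {w\<in>V. E v w \<and> \<not> cycle_adj C v w}" for v
  define M where "M v = insert v (neighbours V E v)" for v
  have NHM: "NH v \<subseteq> M v" for v unfolding NH_def M_def neighbours_def by auto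
  have NHV: "NH v \<subseteq> V" if "v \<in> V" for v unfolding NH_def using that by auto
  have NHsym: "u \<in> NH w" if "w \<in> NH u" for u w
    using that Esym cadj_sym EV unfolding NH_def by auto
  have cardM: "card (M v) \<le> k + 1" if "v \<in> V" for v
  proof -
    have "finite (neighbours V E v)" using finV unfolding neighbours_def by simp
    then show ?thesis unfolding M_def using reg[OF that] by (simp add: card_insert_if)
  qed
  have kn: "k + 1 \<le> n"
  proof -
    obtain v where "v \<in> V" using Vnth nthV n0 by blast
    have "neighbours V E v \<subseteq> V - {v}" unfolding neighbours_def using Eirr by auto
    then have "card (neighbours V E v) \<le> card (V - {v})" using finV by (intro card_mono) auto
    then have "k \<le> n - 1" using reg[OF \<open>v \<in> V\<close>] cardV \<open>v \<in> V\<close> finV by (simp add: card_Diff_singleton)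
    then show ?thesis using n0 by linarith
  qed
  have cardNH: "k - 1 \<le> card (NH v)" if vV: "v \<in> V" for v
  proof -
    obtain i where i: "i < n" "C ! i = v" using Vnth[OF vV] by blast
    define a where "a = C ! nx n i"
    define b where "b = C ! pr n i"
    have sub: "neighbours V E v - {a, b} \<subseteq> {w\<in>V. E v w \<and> \<not> cycle_adj C v w}"
    proof
      fix w assume w: "w \<in> neighbours V E v - {a, b}"
      have "\<not> cycle_adj C v w"
      proof
        assume "cycle_adj C v w"
        then obtain j where j: "j < n" "(v = C ! j \<and> w = C ! nx n j) \<or> (w = C ! j \<and> v = C ! nx n j)"
          using cadj by blast
        show False
        proof (cases "v = C ! j \<and> w = C ! nx n j")
          case True
          then have "j = i" using nthinj i j by metis
          then show False using True w unfolding a_def by auto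
        next
          case False
          then have wj: "w = C ! j" and vj: "v = C ! nx n j" using j by auto
          have "C ! nx n j = C ! i" using vj i by simp
          then have "nx n j = i" using nthinj[OF nx_lt[OF n0(1), of j] i(1)] by simp
          then have "j = pr n i" using pr_nx[OF j(1)] by simp
          then show False using wj w unfolding b_def by auto
        qed
      qed
      then show "w \<in> {w\<in>V. E v w \<and> \<not> cycle_adj C v w}" using w unfolding neighbours_def by auto
    qed
    have finW: "finite {w\<in>V. E v w \<and> \<not> cycle_adj C v w}" using finV by simp
    have "k - 2 \<le> card (neighbours V E v) - card {a, b}"
      using reg[OF vV] by (cases "a = b") (auto simp add: card_insert_if)
    also have "\<dots> \<le> card (neighbours V E v - {a, b})" by (rule diff_card_le_card_Diff) simp
    also have "\<dots> \<le> card {w\<in>V. E v w \<and> \<not> cycle_adj C v w}" by (rule card_mono[OF finW sub])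
    finally have "k - 2 \<le> card {w\<in>V. E v w \<and> \<not> cycle_adj C v w}" .
    moreover have "v \<notin> {w\<in>V. E v w \<and> \<not> cycle_adj C v w}" using Eirr by auto
    ultimately show ?thesis unfolding NH_def using finW by simp
  qed
  obtain T where T: "\<And>v. v \<in> V \<Longrightarrow> T v \<subseteq> NH v \<and> card (T v) = k - 1"
  proof -
    have "\<forall>v\<in>V. \<exists>T. T \<subseteq> NH v \<and> card T = k - 1"
      using cardNH by (metis obtain_subset_with_card_n)
    then show ?thesis using that by metis
  qed
  define P where "P v = {i\<in>{0..<n}. C ! i \<in> T v}" for v
  have cardP: "card (P v) = k - 1" if "v \<in> V" for v
  proof -
    have "bij_betw (\<lambda>i. C ! i) (P v) (T v)"
      unfolding bij_betw_def P_def
    proof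
      show "inj_on (\<lambda>i. C ! i) {i \<in> {0..<n}. C ! i \<in> T v}" using nthinj by (auto intro: inj_onI)
      show "(\<lambda>i. C ! i) ` {i \<in> {0..<n}. C ! i \<in> T v} = T v"
        using T[OF that] NHV[OF that] Vnth by force
    qed
    then show ?thesis using T[OF that] by (simp add: bij_betw_same_card)
  qed
  define B where "B v = P v \<union> pr n ` P v" for v
  define \<Omega> where "\<Omega> = {0..<n} \<rightarrow>\<^sub>E (UNIV::bool set)"
  define A where "A v = {f \<in> \<Omega>. \<forall>i\<in>P v. \<not> start n f i}" for v
  define p :: real where "p = (3/4) ^ (k - 1)"
  define D where "D = 4 * (k + 1)^2"
  have "\<exists>f\<in>\<Omega>. \<forall>v\<in>V. f \<notin> A v"
    unfolding \<Omega>_def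
  proof (rule lll)
    show "finite {0..<n}" by simp
    show "finite V" by (rule finV)
    show "\<forall>v\<in>V. B v \<subseteq> {0..<n}" unfolding B_def P_def using pr_lt n0 by auto
    show "\<forall>v\<in>V. A v \<subseteq> {0..<n} \<rightarrow>\<^sub>E UNIV" unfolding A_def \<Omega>_def by auto
    show "\<forall>v\<in>V. \<forall>f\<in>{0..<n} \<rightarrow>\<^sub>E UNIV. \<forall>g\<in>{0..<n} \<rightarrow>\<^sub>E UNIV.
        (\<forall>i\<in>B v. f i = g i) \<longrightarrow> f \<in> A v \<longrightarrow> g \<in> A v"
      unfolding A_def B_def \<Omega>_def start_def by auto
    show "\<forall>v\<in>V. real (card (A v)) \<le> p * real (card ({0..<n} \<rightarrow>\<^sub>E (UNIV::bool set)))"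
    proof
      fix v assume vV: "v \<in> V"
      have Pn: "P v \<subseteq> {0..<n}" unfolding P_def by auto
      have "card (P v) < n" using cardP[OF vV] kn by simp
      then have "4 ^ (k - 1) * card (A v) \<le> 3 ^ (k - 1) * 2 ^ n"
        using pbound[OF n0(2) Pn] cardP[OF vV] unfolding A_def \<Omega>_def by simp
      then have "real (4 ^ (k - 1) * card (A v)) \<le> real (3 ^ (k - 1) * 2 ^ n)" by linarith
      then have "4 ^ (k - 1) * real (card (A v)) \<le> 3 ^ (k - 1) * 2 ^ n" by simp
      then have "real (card (A v)) \<le> 3 ^ (k - 1) * 2 ^ n / 4 ^ (k - 1)"
        by (simp add: pos_le_divide_eq mult.commute)
      also have "\<dots> = p * 2 ^ n" unfolding p_def by (simp add: power_divide)
      finally show "real (card (A v)) \<le> p * real (card ({0..<n} \<rightarrow>\<^sub>E (UNIV::bool set)))"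
        using card_Om[of n] by simp
    qed
    show "\<forall>v\<in>V. card {u \<in> V. B u \<inter> B v \<noteq> {}} \<le> D"
    proof
      fix v assume vV: "v \<in> V"
      define U where "U x = M (C ! x) \<union> M (C ! nx n x)" for x
      have sub: "{u \<in> V. B u \<inter> B v \<noteq> {}} \<subseteq> (\<Union>x\<in>B v. U x)"
      proof
        fix u assume "u \<in> {u \<in> V. B u \<inter> B v \<noteq> {}}"
        then obtain x where uV: "u \<in> V" and xu: "x \<in> B u" and xv: "x \<in> B v" by blast
        have "u \<in> U x"
        proof (cases "x \<in> P u")
          case True
          then have "C ! x \<in> NH u" using T[OF uV] unfolding P_def by auto
          then have "u \<in> NH (C ! x)" by (rule NHsym)
          then show ?thesis using NHM unfolding U_def by auto
        next
          case False
          then obtain y where y: "y \<in> P u" "x = pr n y" using xu unfolding B_def by auto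
          have yn: "y < n" using y unfolding P_def by auto
          have "nx n x = y" using y nx_pr[OF yn] by simp
          moreover have "C ! y \<in> NH u" using T[OF uV] y unfolding P_def by auto
          ultimately have "u \<in> NH (C ! nx n x)" using NHsym by simp
          then show ?thesis using NHM unfolding U_def by auto
        qed
        then show "u \<in> (\<Union>x\<in>B v. U x)" using xv by blast
      qed
      have finP: "finite (P v)" unfolding P_def by simp
      have finB: "finite (B v)" unfolding B_def using finP by simp
      have finM: "finite (M w)" for w unfolding M_def neighbours_def using finV by simp
      have cU: "card (U x) \<le> 2 * (k + 1)" if "x \<in> B v" for x
      proof -
        have xn: "x < n" using that unfolding B_def P_def using pr_lt n0 by auto
        have "card (U x) \<le> card (M (C ! x)) + card (M (C ! nx n x))"
          unfolding U_def by (rule card_Un_le)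
        also have "\<dots> \<le> (k + 1) + (k + 1)"
          using cardM[OF nthV[OF xn]] cardM[OF nthV[OF nx_lt[OF n0(1), of x]]] by simp
        finally show ?thesis by simp
      qed
      have cB: "card (B v) \<le> 2 * (k - 1)"
      proof -
        have "card (B v) \<le> card (P v) + card (pr n ` P v)" unfolding B_def by (rule card_Un_le)
        also have "\<dots> \<le> card (P v) + card (P v)" using card_image_le[OF finP] by simp
        finally show ?thesis using cardP[OF vV] by simp
      qed
      have "card {u \<in> V. B u \<inter> B v \<noteq> {}} \<le> card (\<Union>x\<in>B v. U x)"
        using sub finB finM unfolding U_def by (intro card_mono) auto
      also have "\<dots> \<le> (\<Sum>x\<in>B v. card (U x))" by (rule card_UN_le[OF finB])
      also have "\<dots> \<le> card (B v) * (2 * (k + 1))" using sum_bounded_above[of "B v" "\<lambda>x. card (U x)" "2 * (k + 1)"] cU by simp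
      also have "\<dots> \<le> (2 * (k - 1)) * (2 * (k + 1))" using cB by (rule mult_right_mono) simp
      also have "\<dots> \<le> (2 * (k + 1)) * (2 * (k + 1))" by (intro mult_right_mono) auto
      also have "\<dots> = D" unfolding D_def power2_eq_square by simp
      finally show "card {u \<in> V. B u \<inter> B v \<noteq> {}} \<le> D" .
    qed
    show "0 \<le> p" unfolding p_def by simp
    have num: "real (16 * (k + 1)^2 * 3 ^ (k - 1)) \<le> real ((4::nat) ^ (k - 1))"
      using numeric[OF assms(3)] by linarith
    have "4 * p * real D = real (16 * (k + 1)^2 * 3 ^ (k - 1)) / 4 ^ (k - 1)"
      unfolding p_def D_def by (simp add: power_divide)
    also have "\<dots> \<le> 1" using num by (simp add: divide_le_eq_1)
    finally show pD: "4 * p * real D \<le> 1" .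
    have "1 \<le> D" unfolding D_def by simp
    then have "1 \<le> real D" by simp
    moreover have "0 \<le> p" unfolding p_def by simp
    ultimately have "4 * p \<le> 4 * p * real D" by (simp add: mult_le_cancel_left1)
    then show "2 * p < 1" using pD by linarith
  qed
  then obtain f where fO: "f \<in> \<Omega>" and fA: "\<forall>v\<in>V. f \<notin> A v" by blast
  define S where "S = {C ! i | i. i < n \<and> start n f i}"
  have SV: "S \<subseteq> V" unfolding S_def using nthV by auto
  have indep: "\<forall>u\<in>S. \<forall>v\<in>S. \<not> cycle_adj C u v"
  proof (intro ballI notI)
    fix u v assume uS: "u \<in> S" and vS: "v \<in> S" and ca: "cycle_adj C u v"
    obtain a where a: "a < n" "start n f a" "u = C ! a" using uS unfolding S_def by auto
    obtain b where b: "b < n" "start n f b" "v = C ! b" using vS unfolding S_def by auto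
    have nostart: False if "x < n" "start n f x" "start n f (nx n x)" for x
      using that pr_nx[OF that(1)] unfolding start_def by simp
    obtain j where j: "j < n" "(u = C ! j \<and> v = C ! nx n j) \<or> (v = C ! j \<and> u = C ! nx n j)"
      using ca cadj by blast
    have nxj: "nx n j < n" using nx_lt n0 by simp
    show False
    proof (cases "u = C ! j \<and> v = C ! nx n j")
      case True
      then have "a = j" "b = nx n j" using nthinj a b j nxj by metis+
      then show False using nostart a b j by blast
    next
      case False
      then have "v = C ! j" "u = C ! nx n j" using j by auto
      then have "b = j" "a = nx n j" using nthinj a b j nxj by metis+
      then show False using nostart a b j by blast
    qed
  qed
  have dom: "\<forall>v\<in>V. v \<in> S \<or> (\<exists>w\<in>S. E v w \<and> \<not> cycle_adj C v w)"
  proof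
    fix v assume vV: "v \<in> V"
    have "f \<notin> A v" using fA vV by blast
    then obtain i where iP: "i \<in> P v" and st: "start n f i" using fO unfolding A_def by auto
    have iS: "C ! i \<in> S" using iP st unfolding S_def P_def by auto
    have "C ! i \<in> NH v" using iP T[OF vV] unfolding P_def by auto
    then show "v \<in> S \<or> (\<exists>w\<in>S. E v w \<and> \<not> cycle_adj C v w)"
      using iS unfolding NH_def by auto
  qed
  show ?thesis using SV indep dom by blast
qed

end
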